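(* The polynomials $J$, $\Gamma$ and $B$ are $SL_2(\mathbb{F}_q)$-invariant.
   Context: Let $p>2$ be a prime, $q=p^n$, and $\mathbb{F}$ a field of characteristic $p$ containing $\mathbb{F}_q$. The group $GL_2(\mathbb{F})$ (hence $SL_2(\mathbb{F}_q)$) acts on the right on $\mathbb{F}[a_0,a_1,a_2]$ by algebra automorphisms: for $g=\begin{pmatrix}\alpha&\beta'\\ \gamma'&\delta\end{pmatrix}$, $a_2 g=\alpha^2a_2+2\alpha\beta' a_1+\beta'^2a_0$, $a_1g=\alpha\gamma' a_2+(\alpha\delta+\beta'\gamma')a_1+\beta'\delta a_0$, $a_0g=\gamma'^2a_2+2\gamma'\delta a_1+\delta^2a_0$. Define $\beta=\prod_{c\in\mathbb{F}_q}(a_1+ca_0)$ and for $k\in\mathbb{F}_q$, $\gamma_k=\prod_{c\in\mathbb{F}_q}(a_2+2ca_1+(c^2-k)a_0)$. Let $\mathcal{Q}$ be the set of nonzero quadratic residues in $\mathbb{F}_q$ and $\overline{\mathcal{Q}}$ the set of quadratic nonresidues. Define $\Gamma=\prod_{k\in\overline{\mathcal{Q}}}\gamma_k$, $B=\beta\prod_{k\in\mathcal{Q}}\gamma_k$, $J=a_0\gamma_0$. *)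

theory Defs
  imports "HOL-Computational_Algebra.Polynomial"
begin

text \<open>The polynomial ring F[a0,a1,a2] is represented as the iterated univariate
polynomial ring ('a poly) poly) poly. The variable a0 is the outermost
indeterminate, a1 the middle one, a2 the innermost one.\<close>

definition C3 :: "'a::comm_ring_1 \<Rightarrow> 'a poly poly poly" where
  "C3 c = [:[:[:c:]:]:]"

definition A0 :: "'a::comm_ring_1 poly poly poly" where
  "A0 = [:0, 1:]"

definition A1 :: "'a::comm_ring_1 poly poly poly" where
  "A1 = [:[:0, 1:]:]"

definition A2 :: "'a::comm_ring_1 poly poly poly" where
  "A2 = [:[:[:0, 1:]:]:]"

definition Fq :: "nat \<Rightarrow> 'a::field set" where
  "Fq q = {x. x ^ q = x}"

definition QR :: "'a::field set \<Rightarrow> 'a set" where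
  "QR K = {k \<in> K. k \<noteq> 0 \<and> (\<exists>c\<in>K. c ^ 2 = k)}"

definition QNR :: "'a::field set \<Rightarrow> 'a set" where
  "QNR K = {k \<in> K. \<not> (\<exists>c\<in>K. c ^ 2 = k)}"

text \<open>Polynomials as expressions in the generators (x0,x1,x2) = (a0,a1,a2);
evaluating at other elements of the polynomial ring is substitution.\<close>

definition betaP :: "'a::field set \<Rightarrow> 'a poly poly poly \<Rightarrow> 'a poly poly poly \<Rightarrow> 'a poly poly poly \<Rightarrow> 'a poly poly poly" where
  "betaP K x0 x1 x2 = (\<Prod>c\<in>K. x1 + C3 c * x0)"

definition gammaP :: "'a::field set \<Rightarrow> 'a \<Rightarrow> 'a poly poly poly \<Rightarrow> 'a poly poly poly \<Rightarrow> 'a poly poly poly \<Rightarrow> 'a poly poly poly" where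
  "gammaP K k x0 x1 x2 = (\<Prod>c\<in>K. x2 + C3 (2 * c) * x1 + C3 (c ^ 2 - k) * x0)"

definition GammaP :: "'a::field set \<Rightarrow> 'a poly poly poly \<Rightarrow> 'a poly poly poly \<Rightarrow> 'a poly poly poly \<Rightarrow> 'a poly poly poly" where
  "GammaP K x0 x1 x2 = (\<Prod>k\<in>QNR K. gammaP K k x0 x1 x2)"

definition BP :: "'a::field set \<Rightarrow> 'a poly poly poly \<Rightarrow> 'a poly poly poly \<Rightarrow> 'a poly poly poly \<Rightarrow> 'a poly poly poly" where
  "BP K x0 x1 x2 = betaP K x0 x1 x2 * (\<Prod>k\<in>QR K. gammaP K k x0 x1 x2)"

definition JP :: "'a::field set \<Rightarrow> 'a poly poly poly \<Rightarrow> 'a poly poly poly \<Rightarrow> 'a poly poly poly \<Rightarrow> 'a poly poly poly" where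
  "JP K x0 x1 x2 = x0 * gammaP K 0 x0 x1 x2"

text \<open>Images of the generators under g = (alpha, beta'; gamma', delta).\<close>
definition act2 :: "'a::field \<Rightarrow> 'a \<Rightarrow> 'a \<Rightarrow> 'a \<Rightarrow> 'a poly poly poly" where
  "act2 \<alpha> \<beta> \<gamma> \<delta> = C3 (\<alpha>^2) * A2 + C3 (2 * \<alpha> * \<beta>) * A1 + C3 (\<beta>^2) * A0"

definition act1 :: "'a::field \<Rightarrow> 'a \<Rightarrow> 'a \<Rightarrow> 'a \<Rightarrow> 'a poly poly poly" where
  "act1 \<alpha> \<beta> \<gamma> \<delta> = C3 (\<alpha> * \<gamma>) * A2 + C3 (\<alpha> * \<delta> + \<beta> * \<gamma>) * A1 + C3 (\<beta> * \<delta>) * A0"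

definition act0 :: "'a::field \<Rightarrow> 'a \<Rightarrow> 'a \<Rightarrow> 'a \<Rightarrow> 'a poly poly poly" where
  "act0 \<alpha> \<beta> \<gamma> \<delta> = C3 (\<gamma>^2) * A2 + C3 (2 * \<gamma> * \<delta>) * A1 + C3 (\<delta>^2) * A0"

end

theory Submission imports Defs "HOL-Computational_Algebra.Primes"
begin
type_synonym 'a trip = "'a \<times> 'a \<times> 'a"
type_synonym 'a mat = "'a \<times> 'a \<times> 'a \<times> 'a"

definition sc :: "'a::field trip \<Rightarrow> 'a" where
  "sc v = (case v of (x,y,z) \<Rightarrow> if x \<noteq> 0 then x else if y \<noteq> 0 then y else z)"
definition smul :: "'a::field \<Rightarrow> 'a trip \<Rightarrow> 'a trip" where
  "smul l v = (case v of (x,y,z) \<Rightarrow> (l*x, l*y, l*z))"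
definition nrm :: "'a::field trip \<Rightarrow> 'a trip" where
  "nrm v = smul (inverse (sc v)) v"
definition Tm :: "'a::field mat \<Rightarrow> 'a trip \<Rightarrow> 'a trip" where
  "Tm g v = (case g of (a,b,c,d) \<Rightarrow> case v of (x,y,z) \<Rightarrow>
     (x*a^2 + y*(a*c) + z*c^2, x*(2*a*b) + y*(a*d+b*c) + z*(2*c*d), x*b^2 + y*(b*d) + z*d^2))"
definition mm :: "'a::field mat \<Rightarrow> 'a mat \<Rightarrow> 'a mat" where
  "mm g h = (case g of (a,b,c,d) \<Rightarrow> case h of (a',b',c',d') \<Rightarrow>
     (a*a' + b*c', a*b' + b*d', c*a' + d*c', c*b' + d*d'))"
definition ginv :: "'a::field mat \<Rightarrow> 'a mat" where
  "ginv g = (case g of (a,b,c,d) \<Rightarrow> (d,-b,-c,a))"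
definition dt :: "'a::field mat \<Rightarrow> 'a" where "dt g = (case g of (a,b,c,d) \<Rightarrow> a*d - b*c)"
definition disc :: "'a::field trip \<Rightarrow> 'a" where "disc v = (case v of (x,y,z) \<Rightarrow> y^2 - 4*x*z)"
definition Lf :: "'a::field poly poly poly \<Rightarrow> 'a poly poly poly \<Rightarrow> 'a poly poly poly \<Rightarrow> 'a trip \<Rightarrow> 'a poly poly poly" where
  "Lf x0 x1 x2 v = (case v of (a,b,c) \<Rightarrow> C3 a * x2 + C3 b * x1 + C3 c * x0)"

lemma C3_mult: "C3 (a*b) = C3 a * C3 b" by (simp add: C3_def)
lemma C3_add: "C3 (a+b) = C3 a + C3 b" by (simp add: C3_def)
lemma C3_diff: "C3 (a-b) = C3 a - C3 b" by (simp add: C3_def)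
lemma C3_1: "C3 1 = 1" by (simp add: C3_def pCons_one)
lemma C3_0: "C3 0 = 0" by (simp add: C3_def)
lemma C3_power: "C3 (a^n) = C3 a ^ n" by (induct n) (simp_all add: C3_1 C3_mult)
lemma C3_prod: "C3 (prod f A) = (\<Prod>x\<in>A. C3 (f x))"
  by (induct A rule: infinite_finite_induct) (simp_all add: C3_1 C3_mult)

lemma Tm_mm: "Tm (mm g h) v = Tm h (Tm g v)"
  by (cases g; cases h; cases v) (simp add: Tm_def mm_def power2_eq_square algebra_simps)
lemma disc_Tm: "disc (Tm g v) = dt g ^2 * disc v"
  by (cases g; cases v) (simp add: Tm_def disc_def dt_def power2_eq_square algebra_simps)
lemma Lf_act: "Lf (act0 a b c d) (act1 a b c d) (act2 a b c d) v = Lf A0 A1 A2 (Tm (a,b,c,d) v)"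
  by (cases v) (simp add: Lf_def Tm_def act0_def act1_def act2_def C3_mult C3_add C3_power algebra_simps)

definition PS :: "'a::field set \<Rightarrow> 'a set \<Rightarrow> 'a trip set" where
  "PS K S = {v \<in> K \<times> K \<times> K. sc v = 1 \<and> disc v / 4 \<in> S}"
definition chi :: "'a::field set \<Rightarrow> 'a set \<Rightarrow> 'a mat \<Rightarrow> 'a" where
  "chi K S g = (\<Prod>v\<in>PS K S. sc (Tm g v))"

lemma sc_smul: "l \<noteq> 0 \<Longrightarrow> sc (smul l v) = l * sc v"
  by (cases v) (auto simp: sc_def smul_def)
lemma sc_zero[simp]: "sc (0,0,0) = 0" by (simp add: sc_def)
lemma smul_nrm: "sc v \<noteq> 0 \<Longrightarrow> smul (sc v) (nrm v) = v"
  by (cases v) (simp add: nrm_def smul_def)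
lemma sc_nrm: "sc v \<noteq> 0 \<Longrightarrow> sc (nrm v) = 1"
  by (simp add: nrm_def sc_smul)
lemma smul_smul: "smul a (smul b v) = smul (a*b) v"
  by (cases v) (simp add: smul_def)
lemma smul_1: "smul 1 v = v"
  by (cases v) (simp add: smul_def)
lemma Tm_smul: "Tm g (smul l v) = smul l (Tm g v)"
  by (cases g; cases v) (simp add: Tm_def smul_def algebra_simps)
lemma Tm_0: "Tm g (0,0,0) = (0,0,0)"
  by (cases g) (simp add: Tm_def)
lemma Tm_id: "Tm (1,0,0,1) v = v"
  by (cases v) (simp add: Tm_def)
lemma Tm_inv: "dt g = 1 \<Longrightarrow> Tm (ginv g) (Tm g v) = v"
proof -
  assume "dt g = 1"
  then have "mm g (ginv g) = (1,0,0,1)"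
    by (cases g) (simp add: mm_def ginv_def dt_def algebra_simps)
  then show ?thesis by (metis Tm_mm Tm_id)
qed
lemma dt_ginv: "dt (ginv g) = dt g" by (cases g) (simp add: dt_def ginv_def algebra_simps)
lemma disc_smul: "disc (smul l v) = l^2 * disc v"
  by (cases v) (simp add: disc_def smul_def power2_eq_square algebra_simps)
lemma Lf_smul: "Lf x0 x1 x2 (smul l v) = C3 l * Lf x0 x1 x2 v"
  by (cases v) (simp add: Lf_def smul_def C3_mult algebra_simps)

definition img1 :: "'b::field set \<Rightarrow> 'b set \<Rightarrow> 'b trip set" where
  "img1 K S = (\<lambda>(k,c). (1,2*c,c^2-k)) ` (S \<times> K)"

locale sfield =
  fixes K :: "'a::field set"
  assumes fin: "finite K" and zK: "0 \<in> K" and oK: "1 \<in> K"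
   and addK: "x\<in>K \<Longrightarrow> y\<in>K \<Longrightarrow> x+y \<in> K" and mulK: "x\<in>K \<Longrightarrow> y\<in>K \<Longrightarrow> x*y \<in> K"
   and negK: "x\<in>K \<Longrightarrow> -x \<in> K" and invK: "x\<in>K \<Longrightarrow> inverse x \<in> K"
   and two: "(2::'a) \<noteq> 0"
begin

lemma diffK: "x\<in>K \<Longrightarrow> y\<in>K \<Longrightarrow> x-y \<in> K"
  using addK negK by (metis diff_conv_add_uminus)
lemma divK: "x\<in>K \<Longrightarrow> y\<in>K \<Longrightarrow> x/y \<in> K"
  using mulK invK by (metis divide_inverse)
lemma powK: "x\<in>K \<Longrightarrow> x^n \<in> K"
  by (induct n) (simp_all add: oK mulK)
lemma twoK: "2 \<in> K" using addK oK by (metis one_add_one)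
lemma fourK: "4 \<in> K" using addK twoK by (metis numeral_Bit0)
lemma four: "(4::'a) \<noteq> 0" using two by (metis mult_2 numeral_Bit0 mult_eq_0_iff)

lemmas Kcl = zK oK addK mulK negK invK diffK divK powK twoK fourK

definition inK :: "'a mat \<Rightarrow> bool" where "inK g \<longleftrightarrow> g \<in> K \<times> K \<times> K \<times> K"

lemma Tm_K: "inK g \<Longrightarrow> v \<in> K\<times>K\<times>K \<Longrightarrow> Tm g v \<in> K\<times>K\<times>K"
  by (cases g; cases v) (auto simp: inK_def Tm_def intro!: Kcl)
lemma smul_K: "l \<in> K \<Longrightarrow> v \<in> K\<times>K\<times>K \<Longrightarrow> smul l v \<in> K\<times>K\<times>K"
  by (cases v) (auto simp: smul_def intro!: Kcl)
lemma sc_K: "v \<in> K\<times>K\<times>K \<Longrightarrow> sc v \<in> K"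
  by (cases v) (auto simp: sc_def)
lemma nrm_K: "v \<in> K\<times>K\<times>K \<Longrightarrow> nrm v \<in> K\<times>K\<times>K"
  unfolding nrm_def by (intro smul_K invK sc_K)
lemma fin_PS: "finite (PS K S)"
  by (rule finite_subset[of _ "K\<times>K\<times>K"]) (auto simp: PS_def fin)

context
  fixes S :: "'a set"
  assumes Scl: "\<And>k \<mu>. k \<in> S \<Longrightarrow> \<mu> \<in> K \<Longrightarrow> \<mu> \<noteq> 0 \<Longrightarrow> k * \<mu>^2 \<in> S"
begin

lemma Tm_nz: assumes "dt g = 1" "v \<in> PS K S" shows "sc (Tm g v) \<noteq> 0"
proof
  assume h: "sc (Tm g v) = 0"
  have "Tm g v = (0,0,0)"
    using h by (cases "Tm g v") (auto simp: sc_def split: if_splits)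
  then have "v = (0,0,0)" using Tm_inv[OF assms(1), of v] Tm_0 by metis
  then show False using assms(2) by (simp add: PS_def)
qed

lemma maps: assumes "inK g" "dt g = 1" "v \<in> PS K S" shows "nrm (Tm g v) \<in> PS K S"
proof -
  let ?w = "Tm g v"
  have nz: "sc ?w \<noteq> 0" by (rule Tm_nz[OF assms(2,3)])
  have vK: "v \<in> K\<times>K\<times>K" and dv: "disc v / 4 \<in> S" using assms(3) by (auto simp: PS_def)
  have wK: "?w \<in> K\<times>K\<times>K" by (rule Tm_K[OF assms(1) vK])
  have "disc (nrm ?w) / 4 = (disc v / 4) * (inverse (sc ?w))^2"
    by (simp add: nrm_def disc_smul disc_Tm assms(2))
  also have "\<dots> \<in> S" using Scl[OF dv, of "inverse (sc ?w)"] nz invK sc_K[OF wK] by simp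
  finally show ?thesis using nrm_K[OF wK] sc_nrm[OF nz] by (simp add: PS_def)
qed

lemma inj: assumes "dt g = 1" shows "inj_on (\<lambda>v. nrm (Tm g v)) (PS K S)"
proof (rule inj_onI)
  fix v w assume v: "v \<in> PS K S" and w: "w \<in> PS K S" and e: "nrm (Tm g v) = nrm (Tm g w)"
  define a where "a = sc (Tm g v)"
  define b where "b = sc (Tm g w)"
  have a: "a \<noteq> 0" and b: "b \<noteq> 0" using Tm_nz[OF assms v] Tm_nz[OF assms w] by (auto simp: a_def b_def)
  have "Tm g v = smul a (nrm (Tm g w))" using smul_nrm[of "Tm g v"] a e by (simp add: a_def)
  also have "\<dots> = Tm g (smul (a * inverse b) w)" by (simp add: nrm_def smul_smul Tm_smul b_def)
  finally have "v = smul (a * inverse b) w" using Tm_inv[OF assms] by metis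
  then have "sc v = (a * inverse b) * sc w" using a b by (simp add: sc_smul)
  then have "a * inverse b = 1" using v w by (simp add: PS_def)
  then show "v = w" using \<open>v = _\<close> by (simp add: smul_1)
qed

lemma bij: assumes "inK g" "dt g = 1" shows "bij_betw (\<lambda>v. nrm (Tm g v)) (PS K S) (PS K S)"
proof -
  have "(\<lambda>v. nrm (Tm g v)) ` PS K S \<subseteq> PS K S" using maps[OF assms] by auto
  then have "(\<lambda>v. nrm (Tm g v)) ` PS K S = PS K S"
    using endo_inj_surj[OF fin_PS _ inj[OF assms(2)]] by blast
  then show ?thesis using inj[OF assms(2)] by (simp add: bij_betw_def)
qed

lemma prod_Lf: assumes "inK g" "dt g = 1"
  shows "(\<Prod>v\<in>PS K S. Lf A0 A1 A2 (Tm g v)) = C3 (chi K S g) * (\<Prod>v\<in>PS K S. Lf A0 A1 A2 v)"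
proof -
  have "(\<Prod>v\<in>PS K S. Lf A0 A1 A2 (Tm g v)) =
        (\<Prod>v\<in>PS K S. C3 (sc (Tm g v)) * Lf A0 A1 A2 (nrm (Tm g v)))"
    by (intro prod.cong refl) (metis Lf_smul smul_nrm Tm_nz[OF assms(2)])
  also have "\<dots> = C3 (chi K S g) * (\<Prod>v\<in>PS K S. Lf A0 A1 A2 (nrm (Tm g v)))"
    by (simp add: prod.distrib chi_def C3_prod)
  also have "(\<Prod>v\<in>PS K S. Lf A0 A1 A2 (nrm (Tm g v))) = (\<Prod>v\<in>PS K S. Lf A0 A1 A2 v)"
    by (rule prod.reindex_bij_betw[OF bij[OF assms]])
  finally show ?thesis .
qed

lemma chi_mm: assumes "inK g" "dt g = 1" shows "chi K S (mm g h) = chi K S g * chi K S h"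
proof -
  have "chi K S (mm g h) = (\<Prod>v\<in>PS K S. sc (Tm g v) * sc (Tm h (nrm (Tm g v))))"
    unfolding chi_def Tm_mm
    by (intro prod.cong refl) (metis Tm_smul sc_smul smul_nrm Tm_nz[OF assms(2)])
  also have "\<dots> = chi K S g * (\<Prod>v\<in>PS K S. sc (Tm h (nrm (Tm g v))))"
    by (simp add: prod.distrib chi_def)
  also have "(\<Prod>v\<in>PS K S. sc (Tm h (nrm (Tm g v)))) = chi K S h"
    unfolding chi_def by (rule prod.reindex_bij_betw[OF bij[OF assms]])
  finally show ?thesis .
qed

lemma chi_U: "chi K S (1,x,0,1) = 1"
proof -
  have "sc (Tm (1,x,0,1) v) = sc v" for v
    by (cases v) (simp add: Tm_def sc_def)
  then show ?thesis unfolding chi_def by (intro prod.neutral) (simp add: PS_def)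
qed

lemma chi_L: assumes "t \<in> K" shows "chi K S (1,0,t,1) = 1"
proof -
  let ?S = "(0,1,-1,0) :: 'a mat" and ?S' = "(0,-1,1,0) :: 'a mat" and ?U = "(1,-t,0,1) :: 'a mat"
  have i1: "inK ?S" "inK (mm ?S ?U)" using assms by (auto simp: inK_def mm_def intro!: Kcl)
  have d1: "dt ?S = 1" "dt (mm ?S ?U) = 1" by (simp_all add: dt_def mm_def)
  have "(1,0,t,1) = mm (mm ?S ?U) ?S'" by (simp add: mm_def)
  then have "chi K S (1,0,t,1) = chi K S ?S * chi K S ?U * chi K S ?S'"
    using chi_mm[OF i1(2) d1(2)] chi_mm[OF i1(1) d1(1)] by simp
  also have "\<dots> = chi K S (mm ?S ?S')" using chi_mm[OF i1(1) d1(1)] chi_U by simp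
  also have "mm ?S ?S' = (1,0,0,1)" by (simp add: mm_def)
  finally show ?thesis using chi_U[of 0] by simp
qed

lemma chi_one_c: assumes "inK (a,b,c,d)" "a*d - b*c = 1" "c \<noteq> 0" shows "chi K S (a,b,c,d) = 1"
proof -
  define x where "x = (a-1)/c"
  define y where "y = (d-1)/c"
  have K: "a \<in> K" "b\<in>K" "c\<in>K" "d\<in>K" using assms(1) by (auto simp: inK_def)
  have xK: "x \<in> K" "y \<in> K" using K by (auto simp: x_def y_def intro!: Kcl)
  have "(a,b,c,d) = mm (mm (1,x,0,1) (1,0,c,1)) (1,y,0,1)"
    using assms(2,3) by (simp add: mm_def x_def y_def field_simps)
  moreover have "inK (mm (1,x,0,1) (1,0,c,1))" "dt (mm (1,x,0,1) (1,0,c,1)) = 1"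
     "inK (1,x,0,1)" "dt (1,x,0,1) = 1"
    using xK K by (auto simp: inK_def mm_def dt_def intro!: Kcl)
  ultimately show ?thesis using chi_mm[of "mm (1,x,0,1) (1,0,c,1)" "(1,y,0,1)"] chi_mm[of "(1,x,0,1)" "(1,0,c,1)"] chi_U chi_L[OF K(3)] by simp
qed

lemma chi_one: assumes "inK (a,b,c,d)" "a*d - b*c = 1" shows "chi K S (a,b,c,d) = 1"
proof (cases "c = 0")
  case False then show ?thesis using chi_one_c assms by blast
next
  case True
  have K: "a \<in> K" "b\<in>K" "c\<in>K" "d\<in>K" using assms(1) by (auto simp: inK_def)
  have a: "a \<noteq> 0" using assms(2) True by auto
  have "(a,b,c,d) = mm (1,0,1,1) (a,b,-a,d-b)" using True by (simp add: mm_def)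
  moreover have "chi K S (a,b,-a,d-b) = 1"
  proof (rule chi_one_c)
    show "inK (a, b, - a, d - b)" using K by (simp add: inK_def Kcl)
    show "a * (d - b) - b * - a = 1" using assms(2) True by (simp add: algebra_simps)
  qed (use a in auto)
  moreover have "inK (1,0,1,(1::'a))" "dt (1,0,1,(1::'a)) = 1" by (auto simp: inK_def dt_def Kcl)
  ultimately show ?thesis using chi_mm[of "(1,0,1,1)" "(a,b,-a,d-b)"] chi_L[OF oK] by simp
qed

lemma invariance: assumes "inK (a,b,c,d)" "a*d - b*c = 1"
  shows "(\<Prod>v\<in>PS K S. Lf (act0 a b c d) (act1 a b c d) (act2 a b c d) v) = (\<Prod>v\<in>PS K S. Lf A0 A1 A2 v)"
proof -
  have "dt (a,b,c,d) = 1" using assms(2) by (simp add: dt_def)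
  then show ?thesis using prod_Lf[OF assms(1)] chi_one[OF assms] by (simp add: Lf_act C3_1)
qed

end

lemma sc_eq1: "sc (x,y,z) = 1 \<longleftrightarrow> (x = 1) \<or> (x=0 \<and> y=1) \<or> (x=0 \<and> y=0 \<and> z=1)"
  by (auto simp: sc_def)

lemma PS_cases: assumes "S \<subseteq> K"
  shows "PS K S = img1 K S \<union> {v. v \<in> (\<lambda>c. (0,1,c)) ` K \<and> 1/4 \<in> S} \<union> {v. v = (0,0,1) \<and> 0 \<in> S}"
proof (intro set_eqI iffI)
  fix v assume v: "v \<in> PS K S"
  obtain x y z where vv: "v = (x,y,z)" by (cases v)
  have K: "x\<in>K" "y\<in>K" "z\<in>K" and s: "sc (x,y,z) = 1" and d: "(y^2 - 4*x*z)/4 \<in> S"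
    using v by (auto simp: PS_def vv disc_def)
  show "v \<in> img1 K S \<union> {v. v \<in> (\<lambda>c. (0,1,c)) ` K \<and> 1/4 \<in> S} \<union> {v. v = (0,0,1) \<and> 0 \<in> S}"
  proof (cases "x = 1")
    case True
    define k where "k = (y^2 - 4*x*z)/4"
    define c where "c = y/2"
    have "(1,2*c,c^2-k) = v" using True two four
      by (simp add: vv c_def k_def field_simps power2_eq_square)
    moreover have "(k,c) \<in> S \<times> K" using d K by (auto simp: k_def c_def intro!: Kcl)
    ultimately show ?thesis unfolding img1_def by (metis (no_types, lifting) UnI1 case_prod_conv image_eqI)
  next
    case False
    then show ?thesis using s d K by (auto simp: sc_eq1 vv)
  qed
next
  fix v assume v: "v \<in> img1 K S \<union> {v. v \<in> (\<lambda>c. (0,1,c)) ` K \<and> 1/4 \<in> S} \<union> {v. v = (0,0,1) \<and> 0 \<in> S}"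
  show "v \<in> PS K S"
  proof (cases "v \<in> img1 K S")
    case True
    then obtain k c where kc: "k \<in> S" "c \<in> K" "v = (1,2*c,c^2-k)" by (auto simp: img1_def)
    have "disc v = 4 * k" by (simp add: kc disc_def algebra_simps power2_eq_square)
    then have d: "disc v / 4 \<in> S" using four kc(1) by simp
    have vK: "v \<in> K\<times>K\<times>K" using kc assms by (auto intro!: Kcl)
    have "sc v = 1" by (simp add: kc(3) sc_def)
    then show ?thesis using d vK by (simp add: PS_def)
  next
    case False
    then show ?thesis using v by (auto simp: PS_def sc_def disc_def Kcl)
  qed
qed

lemma prod_img1: "(\<Prod>v\<in>img1 K S. Lf x0 x1 x2 v) = (\<Prod>k\<in>S. gammaP K k x0 x1 x2)"
proof -
  have inj: "inj_on (\<lambda>(k,c). (1::'a,2*c,c^2-k)) (S \<times> K)"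
    by (rule inj_onI) (use two in auto)
  have "(\<Prod>v\<in>img1 K S. Lf x0 x1 x2 v) = (\<Prod>(k,c)\<in>S \<times> K. Lf x0 x1 x2 (1,2*c,c^2-k))"
    unfolding img1_def by (subst prod.reindex[OF inj]) (simp add: case_prod_beta')
  also have "\<dots> = (\<Prod>k\<in>S. \<Prod>c\<in>K. Lf x0 x1 x2 (1,2*c,c^2-k))"
    by (rule prod.cartesian_product[symmetric])
  finally show ?thesis by (simp add: gammaP_def Lf_def C3_1)
qed

lemma img1_notin: "(0,a,b) \<notin> img1 K S" by (auto simp: img1_def)

lemma JP_PS: "JP K x0 x1 x2 = (\<Prod>v\<in>PS K {0}. Lf x0 x1 x2 v)"
proof -
  have "PS K {0} = insert (0,0,1) (img1 K {0})" using PS_cases[of "{0}"] zK two four by auto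
  then show ?thesis using prod_img1[where S="{0}"] fin img1_notin
    by (simp add: JP_def Lf_def C3_0 C3_1 img1_def)
qed

lemma Gamma_PS: "GammaP K x0 x1 x2 = (\<Prod>v\<in>PS K (QNR K). Lf x0 x1 x2 v)"
proof -
  have a: "1/4 \<notin> QNR K" using two four Kcl unfolding QNR_def
    by (auto intro!: bexI[of _ "1/2"] simp: power2_eq_square)
  have b: "0 \<notin> QNR K" using zK by (auto simp: QNR_def)
  have sub: "QNR K \<subseteq> K" by (auto simp: QNR_def)
  have "PS K (QNR K) = img1 K (QNR K)" using PS_cases[OF sub] a b by simp
  then show ?thesis using prod_img1 by (simp add: GammaP_def)
qed

lemma B_PS: "BP K x0 x1 x2 = (\<Prod>v\<in>PS K (QR K). Lf x0 x1 x2 v)"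
proof -
  have a: "1/4 \<in> QR K" using two four Kcl unfolding QR_def
    by (auto intro!: bexI[of _ "1/2"] simp: power2_eq_square)
  have b: "0 \<notin> QR K" by (auto simp: QR_def)
  have e: "PS K (QR K) = (\<lambda>c. (0,1,c)) ` K \<union> img1 K (QR K)"
    using PS_cases[of "QR K"] a b by (auto simp: QR_def[of K])
  have fi: "finite (img1 K (QR K))" unfolding img1_def
    by (intro finite_imageI finite_cartesian_product fin) (auto simp: QR_def intro: finite_subset[OF _ fin])
  have "(\<Prod>v\<in>PS K (QR K). Lf x0 x1 x2 v) = (\<Prod>v\<in>(\<lambda>c. (0,1,c)) ` K. Lf x0 x1 x2 v) * (\<Prod>v\<in>img1 K (QR K). Lf x0 x1 x2 v)"
    unfolding e by (rule prod.union_disjoint) (use fin fi img1_notin in auto)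
  also have "(\<Prod>v\<in>(\<lambda>c. (0,1,c)) ` K. Lf x0 x1 x2 v) = betaP K x0 x1 x2"
    by (subst prod.reindex) (auto simp: inj_on_def betaP_def Lf_def C3_0 C3_1)
  finally show ?thesis using prod_img1 by (simp add: BP_def)
qed

end

lemma sfield_Fq:
  fixes p n q :: nat
  assumes "prime p" and "p > 2" and "CHAR('a::field) = p"
    and "n \<ge> 1" and "q = p ^ n"
    and "card (Fq q :: 'a set) = q"
  shows "sfield (Fq q :: 'a set)"
proof -
  have pr: "prime CHAR('a)" using assms by simp
  have q0: "q > 0" using assms prime_gt_0_nat by simp
  have oq: "odd q" using assms prime_odd_nat[OF assms(1)] by simp
  have fr: "(x + y :: 'a) ^ q = x ^ q + y ^ q" for x y
    by (rule freshmans_dream'[OF pr]) (use assms in simp)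
  show ?thesis
  proof
    show "finite (Fq q :: 'a set)" using assms(6) q0 card_ge_0_finite by metis
    show "0 \<in> (Fq q :: 'a set)" using q0 by (simp add: Fq_def)
    show "1 \<in> (Fq q :: 'a set)" by (simp add: Fq_def)
    show "x + y \<in> Fq q" if "x \<in> Fq q" "y \<in> Fq q" for x y :: 'a using that fr by (simp add: Fq_def)
    show "x * y \<in> Fq q" if "x \<in> Fq q" "y \<in> Fq q" for x y :: 'a using that by (simp add: Fq_def power_mult_distrib)
    show "- x \<in> Fq q" if "x \<in> Fq q" for x :: 'a using that oq by (simp add: Fq_def power_minus_odd)
    show "inverse x \<in> Fq q" if "x \<in> Fq q" for x :: 'a using that by (simp add: Fq_def power_inverse)
    have "\<not> CHAR('a) dvd 2" using assms by (metis dvd_imp_le le_antisym less_imp_le_nat not_less zero_less_numeral)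
    then have "of_nat 2 \<noteq> (0::'a)" using of_nat_eq_0_iff_char_dvd by metis
    then show "(2::'a) \<noteq> 0" by simp
  qed
qed

theorem lemma3p1:
  fixes p n q :: nat
  assumes "prime p" and "p > 2" and "CHAR('a::field) = p"
    and "n \<ge> 1" and "q = p ^ n"
    and "card (Fq q :: 'a set) = q"
  shows "\<forall>\<alpha>\<in>Fq q. \<forall>\<beta>\<in>Fq q. \<forall>\<gamma>\<in>Fq q. \<forall>\<delta>\<in>Fq q. \<alpha> * \<delta> - \<beta> * \<gamma> = (1::'a) \<longrightarrow>
      JP (Fq q) (act0 \<alpha> \<beta> \<gamma> \<delta>) (act1 \<alpha> \<beta> \<gamma> \<delta>) (act2 \<alpha> \<beta> \<gamma> \<delta>) = JP (Fq q) A0 A1 A2 \<and>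
      GammaP (Fq q) (act0 \<alpha> \<beta> \<gamma> \<delta>) (act1 \<alpha> \<beta> \<gamma> \<delta>) (act2 \<alpha> \<beta> \<gamma> \<delta>) = GammaP (Fq q) A0 A1 A2 \<and>
      BP (Fq q) (act0 \<alpha> \<beta> \<gamma> \<delta>) (act1 \<alpha> \<beta> \<gamma> \<delta>) (act2 \<alpha> \<beta> \<gamma> \<delta>) = BP (Fq q) A0 A1 A2"
proof (intro ballI impI)
  fix a b c d :: 'a
  assume K: "a \<in> Fq q" "b \<in> Fq q" "c \<in> Fq q" "d \<in> Fq q" and det: "a * d - b * c = 1"
  interpret sfield "Fq q :: 'a set" by (rule sfield_Fq[OF assms])
  have g: "inK (a,b,c,d)" using K by (simp add: inK_def)
  have c0: "k * \<mu>^2 \<in> {0}" if "k \<in> {0}" for k \<mu> :: 'a using that by simp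
  have c1: "k * \<mu>^2 \<in> QNR (Fq q)" if "k \<in> QNR (Fq q)" "\<mu> \<in> Fq q" "\<mu> \<noteq> 0" for k \<mu> :: 'a
  proof -
    have kK: "k \<in> Fq q" and ns: "\<And>c. c \<in> Fq q \<Longrightarrow> c^2 \<noteq> k" using that(1) by (auto simp: QNR_def)
    have "c^2 \<noteq> k * \<mu>^2" if "c \<in> Fq q" for c
    proof
      assume "c^2 = k * \<mu>^2"
      then have "(c/\<mu>)^2 = k" using \<open>\<mu> \<noteq> 0\<close> by (simp add: power_divide)
      moreover have "c/\<mu> \<in> Fq q" using that \<open>\<mu> \<in> Fq q\<close> by (rule divK)
      ultimately show False using ns by blast
    qed
    then show ?thesis using kK that(2) by (auto simp: QNR_def intro: mulK powK)
  qed
  have c2: "k * \<mu>^2 \<in> QR (Fq q)" if h: "k \<in> QR (Fq q)" "\<mu> \<in> Fq q" "\<mu> \<noteq> 0" for k \<mu> :: 'a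
  proof -
    obtain c where "k \<in> Fq q" "k \<noteq> 0" "c \<in> Fq q" "c^2 = k" using h(1) unfolding QR_def by blast
    then show ?thesis using h(2,3)
      by (auto simp: QR_def intro!: mulK powK bexI[of _ "c*\<mu>"] simp: power_mult_distrib)
  qed
  show "JP (Fq q) (act0 a b c d) (act1 a b c d) (act2 a b c d) = JP (Fq q) A0 A1 A2 \<and>
      GammaP (Fq q) (act0 a b c d) (act1 a b c d) (act2 a b c d) = GammaP (Fq q) A0 A1 A2 \<and>
      BP (Fq q) (act0 a b c d) (act1 a b c d) (act2 a b c d) = BP (Fq q) A0 A1 A2"
    unfolding JP_PS Gamma_PS B_PS
    using invariance[of "{0}", OF c0 g det] invariance[of "QNR (Fq q)", OF c1 g det]
      invariance[of "QR (Fq q)", OF c2 g det] by blast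
qed

end
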